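(* Fix a resource block $n$. Let $\mathcal K=\{1,\dots,K\}$, and for each $k\in\mathcal K$ let $M^{(k)}\ge 1$ be an integer and $\tilde{\mathcal K}^{(k)}\subseteq\mathcal K\setminus\{k\}$ a set with $|\tilde{\mathcal K}^{(k)}|=\tilde K$ for all $k$. Let $w^{(k)}_m, r^{(k)}_{m,n}, \tilde r^{(k,\tilde k)}_{m,n}$ be arbitrary real coefficients. Consider the linear program in the variables $x^{(k)}_{m,n}$ ($k\in\mathcal K$, $m\in\{1,\dots,M^{(k)}\}$), $y^{(k,\tilde k)}_{m,n}$ ($k\in\mathcal K$, $\tilde k\in\tilde{\mathcal K}^{(k)}$, $m\in\{1,\dots,M^{(k)}\}$) and $I^{(k)}_n$ ($k\in\mathcal K$): $$\max\ \sum_{k=1}^K\sum_{m=1}^{M^{(k)}} w^{(k)}_m\Big(x^{(k)}_{m,n}r^{(k)}_{m,n}+\sum_{\tilde k\in\tilde{\mathcal K}^{(k)}} y^{(k,\tilde k)}_{m,n}\tilde r^{(k,\tilde k)}_{m,n}\Big)$$ subject to $\sum_{m=1}^{M^{(k)}}x^{(k)}_{m,n}=1-I^{(k)}_n$ for all $k$; $\sum_{\tilde k\in\tilde{\mathcal K}^{(k)}}y^{(k,\tilde k)}_{m,n}\le x^{(k)}_{m,n}$ for all $k,m$; $\sum_{m=1}^{M^{(k)}}y^{(k,\tilde k)}_{m,n}\le I^{(\tilde k)}_n$ for all $k$ and $\tilde k\in\tilde{\mathcal K}^{(k)}$; and $x^{(k)}_{m,n},y^{(k,\tilde k)}_{m,n},I^{(k)}_n\in[0,1]$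 for all indices. Then at every optimal vertex (basic optimal solution) of this linear program, the percentage of variables taking a value in $\{0,1\}$ is at least $$\frac{\tilde K(\bar M-1)}{(\tilde K+1)\bar M+1}\cdot 100\%,\qquad \bar M=\frac1K\sum_{k=1}^K M^{(k)}.$$
   Context: This linear program is the relaxation (binary constraints replaced by $[0,1]$ bounds) of a binary linear program for weighted sum-rate maximization with resource-block blanking in a $K$-sector cellular network: $x^{(k)}_{m,n}$ indicates assignment of resource block $n$ to user $m$ in sector $k$, $I^{(k)}_n$ indicates that block $n$ is blanked in sector $k$, and $y^{(k,\tilde k)}_{m,n}$ are auxiliary variables. $\tilde K$ is the common number of neighboring interfering sectors per sector and $\bar M$ the average number of users per sector. *)

theory Defs
  imports "HOL-Analysis.Analysis"
begin

text \<open>Variables of the LP for a fixed resource block n: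
  XV k m   stands for x^(k)_{m,n},
  YV k kt m stands for y^(k,kt)_{m,n},
  IV k     stands for I^(k)_n.\<close>
datatype lpvar = XV nat nat | YV nat nat nat | IV nat

definition lp_vars :: "nat \<Rightarrow> (nat \<Rightarrow> nat) \<Rightarrow> (nat \<Rightarrow> nat set) \<Rightarrow> lpvar set" where
  "lp_vars K M Kt =
     {XV k m | k m. k \<in> {1..K} \<and> m \<in> {1..M k}}
   \<union> {YV k kt m | k kt m. k \<in> {1..K} \<and> kt \<in> Kt k \<and> m \<in> {1..M k}}
   \<union> {IV k | k. k \<in> {1..K}}"

text \<open>Feasible set of the LP relaxation. A point is a function from variables to reals;
  coordinates outside lp_vars are pinned to 0 so that they play no role.\<close>
definition lp_feasible :: "nat \<Rightarrow> (nat \<Rightarrow> nat) \<Rightarrow> (nat \<Rightarrow> nat set) \<Rightarrow> (lpvar \<Rightarrow> real) set" where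
  "lp_feasible K M Kt = {v.
     (\<forall>u. u \<notin> lp_vars K M Kt \<longrightarrow> v u = 0)
   \<and> (\<forall>u \<in> lp_vars K M Kt. 0 \<le> v u \<and> v u \<le> 1)
   \<and> (\<forall>k \<in> {1..K}. (\<Sum>m = 1..M k. v (XV k m)) = 1 - v (IV k))
   \<and> (\<forall>k \<in> {1..K}. \<forall>m \<in> {1..M k}. (\<Sum>kt \<in> Kt k. v (YV k kt m)) \<le> v (XV k m))
   \<and> (\<forall>k \<in> {1..K}. \<forall>kt \<in> Kt k. (\<Sum>m = 1..M k. v (YV k kt m)) \<le> v (IV kt))}"

definition lp_objective ::
  "nat \<Rightarrow> (nat \<Rightarrow> nat) \<Rightarrow> (nat \<Rightarrow> nat set) \<Rightarrow> (nat \<Rightarrow> nat \<Rightarrow> real) \<Rightarrow>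
   (nat \<Rightarrow> nat \<Rightarrow> real) \<Rightarrow> (nat \<Rightarrow> nat \<Rightarrow> nat \<Rightarrow> real) \<Rightarrow> (lpvar \<Rightarrow> real) \<Rightarrow> real" where
  "lp_objective K M Kt w r rt v =
     (\<Sum>k = 1..K. \<Sum>m = 1..M k. w k m *
        (v (XV k m) * r k m + (\<Sum>kt \<in> Kt k. v (YV k kt m) * rt k kt m)))"

text \<open>Vertex (extreme point) of a set of points, written out as the library notion
  extreme_point_of unfolds (function spaces are not a real_vector instance).\<close>
definition is_vertex :: "(lpvar \<Rightarrow> real) \<Rightarrow> (lpvar \<Rightarrow> real) set \<Rightarrow> bool" where
  "is_vertex v P \<longleftrightarrow> v \<in> P \<and>
     \<not> (\<exists>a \<in> P. \<exists>b \<in> P. a \<noteq> b \<and> (\<exists>t::real. 0 < t \<and> t < 1 \<and> v = (\<lambda>u. (1 - t) * a u + t * b u)))"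

end

theory Submission
  imports Defs
begin

lemma matrix_null:
  fixes R :: "'r set"
  assumes "finite R"
  shows "\<forall>(F::'v set) (A::'r \<Rightarrow> 'v \<Rightarrow> real). finite F \<longrightarrow> card R < card F \<longrightarrow>
     (\<exists>c. (\<exists>u\<in>F. c u \<noteq> 0) \<and> (\<forall>s\<in>R. (\<Sum>u\<in>F. c u * A s u) = 0))"
  using assms
proof (induction R rule: finite_induct)
  case empty
  show ?case
  proof (intro allI impI)
    fix F :: "'v set" and A :: "'r \<Rightarrow> 'v \<Rightarrow> real"
    assume "finite F" "card {} < card F"
    then obtain u where "u \<in> F" by fastforce
    then show "\<exists>c. (\<exists>u\<in>F. c u \<noteq> 0) \<and> (\<forall>s\<in>{}. (\<Sum>u\<in>F. c u * A s u) = 0)"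
      by (intro exI[of _ "\<lambda>_. 1"]) auto
  qed
next
  case (insert r R)
  show ?case
  proof (intro allI impI)
    fix F :: "'v set" and A :: "'r \<Rightarrow> 'v \<Rightarrow> real"
    assume fF: "finite F" and cF: "card (insert r R) < card F"
    have cR: "card (insert r R) = Suc (card R)" using insert by simp
    show "\<exists>c. (\<exists>u\<in>F. c u \<noteq> 0) \<and> (\<forall>s\<in>insert r R. (\<Sum>u\<in>F. c u * A s u) = 0)"
    proof (cases "\<forall>u\<in>F. A r u = 0")
      case True
      from insert.IH fF cF cR obtain c where c: "\<exists>u\<in>F. c u \<noteq> 0" "\<forall>s\<in>R. (\<Sum>u\<in>F. c u * A s u) = 0"
        by (metis Suc_lessD)
      show ?thesis using c True by (intro exI[of _ c]) auto
    next
      case False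
      then obtain u0 where u0: "u0 \<in> F" "A r u0 \<noteq> 0" by blast
      define A' where "A' s u = A s u - A s u0 * A r u / A r u0" for s u
      have "card (F - {u0}) = card F - 1" using u0 fF by simp
      with cF cR have "card R < card (F - {u0})" by simp
      with insert.IH fF obtain c' where c': "\<exists>u\<in>F - {u0}. c' u \<noteq> 0"
        "\<forall>s\<in>R. (\<Sum>u\<in>F - {u0}. c' u * A' s u) = 0" by blast
      define c where "c u = (if u = u0 then - (\<Sum>w\<in>F - {u0}. c' w * A r w) / A r u0 else c' u)" for u
      have split: "(\<Sum>u\<in>F. c u * A s u) = c u0 * A s u0 + (\<Sum>u\<in>F - {u0}. c' u * A s u)" for s
      proof -
        have "(\<Sum>u\<in>F. c u * A s u) = c u0 * A s u0 + (\<Sum>u\<in>F - {u0}. c u * A s u)"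
          using u0 fF by (simp add: sum.remove)
        also have "(\<Sum>u\<in>F - {u0}. c u * A s u) = (\<Sum>u\<in>F - {u0}. c' u * A s u)"
          by (rule sum.cong) (auto simp: c_def)
        finally show ?thesis .
      qed
      have "\<forall>s\<in>insert r R. (\<Sum>u\<in>F. c u * A s u) = 0"
      proof
        fix s assume s: "s \<in> insert r R"
        show "(\<Sum>u\<in>F. c u * A s u) = 0"
        proof (cases "s = r")
          case True
          then show ?thesis using u0 unfolding True split by (simp add: c_def)
        next
          case False
          with s have sR: "s \<in> R" by simp
          have "(\<Sum>u\<in>F - {u0}. c' u * A' s u)
              = (\<Sum>u\<in>F - {u0}. c' u * A s u) - A s u0 / A r u0 * (\<Sum>u\<in>F - {u0}. c' u * A r u)"
            by (simp add: A'_def algebra_simps sum_subtractf sum_distrib_left sum_divide_distrib)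
          then show ?thesis using c'(2) sR u0 unfolding split by (simp add: c_def algebra_simps)
        qed
      qed
      moreover have "\<exists>u\<in>F. c u \<noteq> 0" using c'(1) by (auto simp: c_def)
      ultimately show ?thesis by blast
    qed
  qed
qed


datatype rowlab = REq nat | RX nat nat | RI nat nat

fun Lrow :: "(nat \<Rightarrow> nat) \<Rightarrow> (nat \<Rightarrow> nat set) \<Rightarrow> rowlab \<Rightarrow> (lpvar \<Rightarrow> real) \<Rightarrow> real" where
  "Lrow M Kt (REq k) d = (\<Sum>m=1..M k. d (XV k m)) + d (IV k)"
| "Lrow M Kt (RX k m) d = (\<Sum>kt\<in>Kt k. d (YV k kt m)) - d (XV k m)"
| "Lrow M Kt (RI k kt) d = (\<Sum>m=1..M k. d (YV k kt m)) - d (IV kt)"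

lemma Lrow_lin:
  "Lrow M Kt s (\<lambda>w. \<Sum>u\<in>F. c u * g u w) = (\<Sum>u\<in>F. c u * Lrow M Kt s (g u))"
  by (cases s) (simp_all add: sum.swap[of _ F] sum_distrib_left sum.distrib sum_subtractf algebra_simps)

lemma Lrow_scale:
  "Lrow M Kt s (\<lambda>w. t * g w) = t * Lrow M Kt s g"
  by (cases s) (simp_all add: sum_distrib_left algebra_simps)

lemma pert:
  assumes v: "v \<in> lp_feasible K M Kt"
    and dz: "\<forall>u. u \<notin> lp_vars K M Kt \<longrightarrow> d u = 0"
    and b: "\<forall>u\<in>lp_vars K M Kt. 0 \<le> v u + d u \<and> v u + d u \<le> 1"
    and e1: "\<forall>k\<in>{1..K}. Lrow M Kt (REq k) d = 0"
    and e2: "\<forall>k\<in>{1..K}. \<forall>m\<in>{1..M k}. Lrow M Kt (RX k m) d = 0"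
    and e3: "\<forall>k\<in>{1..K}. \<forall>kt\<in>Kt k. Lrow M Kt (RI k kt) d = 0"
  shows "(\<lambda>u. v u + d u) \<in> lp_feasible K M Kt"
proof -
  from v have v1: "\<forall>u. u \<notin> lp_vars K M Kt \<longrightarrow> v u = 0"
    and v3: "\<forall>k \<in> {1..K}. (\<Sum>m = 1..M k. v (XV k m)) = 1 - v (IV k)"
    and v4: "\<forall>k \<in> {1..K}. \<forall>m \<in> {1..M k}. (\<Sum>kt \<in> Kt k. v (YV k kt m)) \<le> v (XV k m)"
    and v5: "\<forall>k \<in> {1..K}. \<forall>kt \<in> Kt k. (\<Sum>m = 1..M k. v (YV k kt m)) \<le> v (IV kt)"
    unfolding lp_feasible_def by auto
  show ?thesis unfolding lp_feasible_def
  proof (intro CollectI conjI ballI allI impI)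
    fix u assume "u \<notin> lp_vars K M Kt" then show "v u + d u = 0" using v1 dz by simp
  next
    fix u assume "u \<in> lp_vars K M Kt" then show "0 \<le> v u + d u" "v u + d u \<le> 1" using b by auto
  next
    fix k assume k: "k \<in> {1..K}"
    show "(\<Sum>m = 1..M k. v (XV k m) + d (XV k m)) = 1 - (v (IV k) + d (IV k))"
      using v3[rule_format, OF k] e1[rule_format, OF k] by (simp add: sum.distrib)
  next
    fix k m assume k: "k \<in> {1..K}" and m: "m \<in> {1..M k}"
    show "(\<Sum>kt \<in> Kt k. v (YV k kt m) + d (YV k kt m)) \<le> v (XV k m) + d (XV k m)"
      using v4[rule_format, OF k m] e2[rule_format, OF k m] by (simp add: sum.distrib)
  next
    fix k kt assume k: "k \<in> {1..K}" and kt: "kt \<in> Kt k"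
    show "(\<Sum>m = 1..M k. v (YV k kt m) + d (YV k kt m)) \<le> v (IV kt) + d (IV kt)"
      using v5[rule_format, OF k kt] e3[rule_format, OF k kt] by (simp add: sum.distrib)
  qed
qed


lemma frac_bound:
  fixes R :: "rowlab set"
  assumes vertex: "is_vertex v (lp_feasible K M Kt)"
    and fR: "finite R"
    and Rc: "\<forall>k\<in>{1..K}. REq k \<in> R" "\<forall>k\<in>{1..K}. \<forall>m\<in>{1..M k}. RX k m \<in> R"
            "\<forall>k\<in>{1..K}. \<forall>kt\<in>Kt k. RI k kt \<in> R"
    and fV: "finite (lp_vars K M Kt)"
  shows "card {u \<in> lp_vars K M Kt. \<not> (v u = 0 \<or> v u = 1)} \<le> card R"
proof (rule ccontr)
  define V where "V = lp_vars K M Kt"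
  define F where "F = {u \<in> V. \<not> (v u = 0 \<or> v u = 1)}"
  assume "\<not> card {u \<in> lp_vars K M Kt. \<not> (v u = 0 \<or> v u = 1)} \<le> card R"
  then have cF: "card R < card F" unfolding F_def V_def by simp
  have fF: "finite F" using fV unfolding F_def V_def by simp
  have FV: "F \<subseteq> V" unfolding F_def by auto
  have vf: "v \<in> lp_feasible K M Kt" using vertex unfolding is_vertex_def by simp
  then have vb: "\<forall>u\<in>V. 0 \<le> v u \<and> v u \<le> 1" unfolding lp_feasible_def V_def by auto
  have vF: "0 < v u \<and> v u < 1" if "u \<in> F" for u
    using that vb unfolding F_def by force
  define \<delta> :: "lpvar \<Rightarrow> lpvar \<Rightarrow> real" where "\<delta> u = (\<lambda>w. if w = u then 1 else 0)" for u
  obtain c where c1: "\<exists>u\<in>F. c u \<noteq> 0" and c2: "\<forall>s\<in>R. (\<Sum>u\<in>F. c u * Lrow M Kt s (\<delta> u)) = 0"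
    using matrix_null[OF fR, rule_format, OF fF cF, of "\<lambda>s u. Lrow M Kt s (\<delta> u)"] by blast
  define d where "d w = (if w \<in> F then c w else 0)" for w
  have dsum: "(\<lambda>w. \<Sum>u\<in>F. c u * \<delta> u w) = d"
  proof
    fix w
    have "(\<Sum>u\<in>F. c u * \<delta> u w) = (\<Sum>u\<in>F. if w = u then c u else 0)"
      by (rule sum.cong) (auto simp: \<delta>_def)
    then show "(\<Sum>u\<in>F. c u * \<delta> u w) = d w" using fF by (simp add: d_def sum.delta)
  qed
  have Ld: "Lrow M Kt s d = 0" if "s \<in> R" for s
    using c2 that Lrow_lin[where M=M and Kt=Kt and s=s and F=F and c=c and g=\<delta>] dsum by simp
  have ne: "F \<noteq> {}" using c1 by blast
  define m0 where "m0 = Min ((\<lambda>u. min (v u) (1 - v u)) ` F)"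
  have m0pos: "m0 > 0" unfolding m0_def using fF ne vF by (simp add: Min_gr_iff)
  have m0le: "m0 \<le> v u" "m0 \<le> 1 - v u" if "u \<in> F" for u
    unfolding m0_def using fF that by (auto intro!: Min.coboundedI[THEN order_trans])
  define B where "B = 1 + (\<Sum>u\<in>F. \<bar>c u\<bar>)"
  have cB: "\<bar>c u\<bar> < B" if "u \<in> F" for u
  proof -
    have "\<bar>c u\<bar> \<le> (\<Sum>u\<in>F. \<bar>c u\<bar>)" using fF that by (intro member_le_sum) auto
    then show ?thesis unfolding B_def by simp
  qed
  have Bpos: "B > 0" using cB ne by (meson abs_ge_zero all_not_in_conv le_less_trans)
  define \<epsilon> where "\<epsilon> = m0 / B"
  have epos: "\<epsilon> > 0" unfolding \<epsilon>_def using m0pos Bpos by simp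
  have small: "\<bar>\<epsilon> * c u\<bar> < m0" if "u \<in> F" for u
  proof -
    have "\<bar>\<epsilon> * c u\<bar> = m0 * \<bar>c u\<bar> / B" unfolding \<epsilon>_def using m0pos Bpos by (simp add: abs_mult)
    also have "\<dots> < m0 * B / B" using cB[OF that] m0pos Bpos
      by (intro divide_strict_right_mono mult_strict_left_mono) auto
    finally show ?thesis using Bpos by simp
  qed
  have feas: "(\<lambda>u. v u + (t * d u)) \<in> lp_feasible K M Kt" if t: "\<bar>t\<bar> = \<epsilon>" for t
  proof (rule pert[OF vf])
    show "\<forall>u. u \<notin> lp_vars K M Kt \<longrightarrow> t * d u = 0" using FV unfolding d_def V_def by auto
    show "\<forall>u\<in>lp_vars K M Kt. 0 \<le> v u + t * d u \<and> v u + t * d u \<le> 1"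
    proof
      fix u assume u: "u \<in> lp_vars K M Kt"
      show "0 \<le> v u + t * d u \<and> v u + t * d u \<le> 1"
      proof (cases "u \<in> F")
        case True
        have "\<bar>t * d u\<bar> < m0" using small[OF True] t True by (simp add: d_def abs_mult)
        then show ?thesis using m0le[OF True] by (auto simp: abs_less_iff)
      next
        case False
        then show ?thesis using vb u unfolding d_def V_def by simp
      qed
    qed
    show "\<forall>k\<in>{1..K}. Lrow M Kt (REq k) (\<lambda>u. t * d u) = 0"
      using Rc Ld by (simp only: Lrow_scale) (simp del: Lrow.simps)
    show "\<forall>k\<in>{1..K}. \<forall>m\<in>{1..M k}. Lrow M Kt (RX k m) (\<lambda>u. t * d u) = 0"
      using Rc Ld by (simp only: Lrow_scale) (simp del: Lrow.simps)
    show "\<forall>k\<in>{1..K}. \<forall>kt\<in>Kt k. Lrow M Kt (RI k kt) (\<lambda>u. t * d u) = 0"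
      using Rc Ld by (simp only: Lrow_scale) (simp del: Lrow.simps)
  qed
  define a where "a = (\<lambda>u. v u + (\<epsilon> * d u))"
  define b where "b = (\<lambda>u. v u + ((- \<epsilon>) * d u))"
  have aP: "a \<in> lp_feasible K M Kt" unfolding a_def using feas epos by simp
  have bP: "b \<in> lp_feasible K M Kt" unfolding b_def using feas[of "- \<epsilon>"] epos by simp
  obtain u1 where u1: "u1 \<in> F" "c u1 \<noteq> 0" using c1 by blast
  have "a u1 \<noteq> b u1" using u1 epos unfolding a_def b_def d_def by simp
  then have ab: "a \<noteq> b" by auto
  have "v = (\<lambda>u. (1 - 1/2) * a u + (1/2) * b u)" unfolding a_def b_def by (simp add: fun_eq_iff algebra_simps)
  then show False using vertex aP bP ab unfolding is_vertex_def
    by (metis field_sum_of_halves half_gt_zero less_add_same_cancel1 zero_less_one)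
qed


theorem proposition1:
  fixes K Ktil :: nat and M :: "nat \<Rightarrow> nat" and Kt :: "nat \<Rightarrow> nat set"
    and w r :: "nat \<Rightarrow> nat \<Rightarrow> real" and rt :: "nat \<Rightarrow> nat \<Rightarrow> nat \<Rightarrow> real"
    and v :: "lpvar \<Rightarrow> real"
  assumes K_pos: "K \<ge> 1"
    and M_pos: "\<forall>k \<in> {1..K}. M k \<ge> 1"
    and Kt_sub: "\<forall>k \<in> {1..K}. Kt k \<subseteq> {1..K} - {k}"
    and Kt_card: "\<forall>k \<in> {1..K}. card (Kt k) = Ktil"
    and vertex: "is_vertex v (lp_feasible K M Kt)"
    and optimal: "\<forall>u \<in> lp_feasible K M Kt.
                    lp_objective K M Kt w r rt u \<le> lp_objective K M Kt w r rt v"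
  defines "Mbar \<equiv> (\<Sum>k = 1..K. real (M k)) / real K"
  shows "real (card {u \<in> lp_vars K M Kt. v u = 0 \<or> v u = 1}) / real (card (lp_vars K M Kt)) * 100
         \<ge> real Ktil * (Mbar - 1) / ((real Ktil + 1) * Mbar + 1) * 100"
proof -
  define S where "S = (\<Sum>k = 1..K. M k)"
  define SX where "SX = Sigma {1..K} (\<lambda>k. {1..M k})"
  define SY where "SY = Sigma {1..K} (\<lambda>k. Kt k \<times> {1..M k})"
  define SI where "SI = Sigma {1..K} Kt"
  define V where "V = lp_vars K M Kt"
  define X where "X = (\<lambda>(k,m). XV k m) ` SX"
  define Y where "Y = (\<lambda>(k,kt,m). YV k kt m) ` SY"
  define I where "I = IV ` {1..K}"
  define R where "R = REq ` {1..K} \<union> (\<lambda>(k,m). RX k m) ` SX \<union> (\<lambda>(k,kt). RI k kt) ` SI"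
  have fKt: "finite (Kt k)" if "k \<in> {1..K}" for k
    using Kt_sub that by (meson finite_Diff finite_atLeastAtMost finite_subset)
  have fSX: "finite SX" unfolding SX_def by simp
  have fSY: "finite SY" unfolding SY_def using fKt by (intro finite_SigmaI) auto
  have fSI: "finite SI" unfolding SI_def using fKt by (intro finite_SigmaI) auto
  have cSX: "card SX = S" unfolding SX_def S_def by (subst card_SigmaI) auto
  have cSY: "card SY = Ktil * S" unfolding SY_def S_def
    using fKt Kt_card by (subst card_SigmaI) (auto simp: card_cartesian_product sum_distrib_left intro!: sum.cong)
  have cSI: "card SI = K * Ktil" unfolding SI_def
    using fKt Kt_card by (subst card_SigmaI) auto
  have VU: "V = X \<union> Y \<union> I"
  proof
    show "V \<subseteq> X \<union> Y \<union> I"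
    proof
      fix u assume "u \<in> V"
      then consider (x) k m where "u = XV k m" "k\<in>{1..K}" "m\<in>{1..M k}"
        | (y) k kt m where "u = YV k kt m" "k\<in>{1..K}" "kt \<in> Kt k" "m\<in>{1..M k}"
        | (i) k where "u = IV k" "k\<in>{1..K}"
        unfolding V_def lp_vars_def by blast
      then show "u \<in> X \<union> Y \<union> I"
      proof cases
        case x then have "u = (\<lambda>(k,m). XV k m) (k,m)" "(k,m)\<in>SX" by (auto simp: SX_def)
        then show ?thesis unfolding X_def by blast
      next
        case y then have "u = (\<lambda>(k,kt,m). YV k kt m) (k,kt,m)" "(k,kt,m)\<in>SY" by (auto simp: SY_def)
        then show ?thesis unfolding Y_def by blast
      next
        case i then show ?thesis unfolding I_def by blast
      qed
    qed
    show "X \<union> Y \<union> I \<subseteq> V" unfolding V_def lp_vars_def X_def Y_def I_def SX_def SY_def by auto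
  qed
  have cX: "card X = S" unfolding X_def using cSX by (subst card_image) (auto simp: inj_on_def)
  have cY: "card Y = Ktil * S" unfolding Y_def using cSY by (subst card_image) (auto simp: inj_on_def)
  have cI: "card I = K" unfolding I_def by (subst card_image) (auto simp: inj_on_def)
  have fX: "finite X" "finite Y" "finite I" unfolding X_def Y_def I_def using fSX fSY by auto
  have cV: "card V = S + Ktil * S + K"
  proof -
    have d1: "X \<inter> Y = {}" "(X \<union> Y) \<inter> I = {}" unfolding X_def Y_def I_def by auto
    have "card (X \<union> Y \<union> I) = card (X \<union> Y) + card I" using fX d1 by (intro card_Un_disjoint) auto
    also have "card (X \<union> Y) = card X + card Y" using fX d1 by (intro card_Un_disjoint) auto
    finally show ?thesis using cX cY cI VU by simp
  qed
  have fV: "finite V" unfolding VU using fX by simp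
  have fR: "finite R" unfolding R_def using fSX fSI by simp
  have cR: "card R \<le> K + S + K * Ktil"
  proof -
    have "card R \<le> card (REq ` {1..K}) + card ((\<lambda>(k,m). RX k m) ` SX) + card ((\<lambda>(k,kt). RI k kt) ` SI)"
      unfolding R_def by (meson add_le_mono card_Un_le le_refl order_trans)
    also have "\<dots> \<le> card {1..K} + card SX + card SI"
      by (intro add_le_mono card_image_le) (simp_all add: fSX fSI)
    finally show ?thesis using cSX cSI by simp
  qed
  have Rc: "\<forall>k\<in>{1..K}. REq k \<in> R" "\<forall>k\<in>{1..K}. \<forall>m\<in>{1..M k}. RX k m \<in> R"
            "\<forall>k\<in>{1..K}. \<forall>kt\<in>Kt k. RI k kt \<in> R"
    unfolding R_def SX_def SI_def by force+
  have fb: "card {u \<in> V. \<not> (v u = 0 \<or> v u = 1)} \<le> card R"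
    using frac_bound[OF vertex fR Rc] fV unfolding V_def by simp
  define Z where "Z = card {u \<in> V. v u = 0 \<or> v u = 1}"
  have part: "Z + card {u \<in> V. \<not> (v u = 0 \<or> v u = 1)} = card V"
  proof -
    have "V = {u \<in> V. v u = 0 \<or> v u = 1} \<union> {u \<in> V. \<not> (v u = 0 \<or> v u = 1)}" by auto
    then have "card V = card {u \<in> V. v u = 0 \<or> v u = 1} + card {u \<in> V. \<not> (v u = 0 \<or> v u = 1)}"
      using fV by (metis (no_types, lifting) card_Un_disjoint disjoint_iff finite_Un mem_Collect_eq)
    then show ?thesis unfolding Z_def by simp
  qed
  have Zge: "real Z \<ge> real Ktil * real S - real K * real Ktil"
    using part fb cR cV by (simp add: of_nat_mult[symmetric] del: of_nat_mult)
  have Kr: "real K > 0" using K_pos by simp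
  have Mb: "Mbar = real S / real K" unfolding Mbar_def S_def by simp
  have rhs: "real Ktil * (Mbar - 1) / ((real Ktil + 1) * Mbar + 1)
           = (real Ktil * real S - real K * real Ktil) / real (card V)"
  proof -
    have p1: "(real Ktil + 1) * (real S / real K) + 1 > 0" using Kr by (intro add_nonneg_pos mult_nonneg_nonneg divide_nonneg_pos) auto
    have p2: "real (S + Ktil * S + K) > 0" using K_pos by (simp only: of_nat_0_less_iff)
    have "real Ktil * (real S / real K - 1) / ((real Ktil + 1) * (real S / real K) + 1)
         = (real Ktil * real S - real K * real Ktil) / real (S + Ktil * S + K)"
    proof -
      have e1: "real Ktil * (real S / real K - 1) = (real Ktil * real S - real K * real Ktil) / real K"
        using Kr by (simp add: field_simps)
      have e2: "(real Ktil + 1) * (real S / real K) + 1 = real (S + Ktil * S + K) / real K"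
        using Kr by (simp add: field_simps)
      show ?thesis unfolding e1 e2 using Kr by simp
    qed
    then show ?thesis unfolding Mb cV .
  qed
  have cVpos: "real (card V) > 0" unfolding cV using K_pos by (simp only: of_nat_0_less_iff)
  have "(real Ktil * real S - real K * real Ktil) / real (card V) \<le> real Z / real (card V)"
    using Zge cVpos by (simp add: divide_right_mono)
  then have "real Ktil * (Mbar - 1) / ((real Ktil + 1) * Mbar + 1) \<le> real Z / real (card V)"
    by (simp only: rhs)
  then show ?thesis unfolding Z_def V_def by (intro mult_right_mono) auto
qed

end
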